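(* For any link amplitudes and any $\mu\in[0,1]$, at an optimal solution of problem (WSR) both users use full power, i.e. $\alpha_1^\star+\beta_1^\star=P$ and $\alpha_2^\star+\beta_2^\star=P$. Moreover, if either user performs block Markov coding ($\alpha_1^\star>0$ or $\alpha_2^\star>0$), the relay uses full power: $k_1^\star\alpha_1^\star+k_2^\star\alpha_2^\star+\beta_3^\star=P$.
   Context: Full-duplex Gaussian two-way relay channel with link amplitudes $g_{ij}\ge0$ (link from node $j$ to node $i$, nodes $1,2,r$) and power $P>0$. With $C(x)=\log(1+x)$ define $J_1=C(g_{r1}^2\beta_1)$, $J_3=C(g_{r2}^2\beta_2)$, $J_5=C(g_{r1}^2\beta_1+g_{r2}^2\beta_2)$, $J_2=C(g_{21}^2P+2g_{21}g_{2r}\sqrt{k_1}\alpha_1+g_{2r}^2k_1\alpha_1+g_{2r}^2\beta_3)$, $J_4=C(g_{12}^2P+2g_{12}g_{1r}\sqrt{k_2}\alpha_2+g_{1r}^2k_2\alpha_2+g_{1r}^2\beta_3)$. Problem (WSR): maximize $\mu R_1+(1-\mu)R_2$ over $R_1,R_2,\alpha_1,\alpha_2,\beta_1,\beta_2,\beta_3,k_1,k_2\ge0$ subject to $R_1\le\min\{J_1,J_2\}$, $R_2\le\min\{J_3,J_4\}$, $R_1+R_2\le J_5$, $\alpha_1+\beta_1\le P$, $\alpha_2+\beta_2\le P$, $k_1\alpha_1+k_2\alpha_2+\beta_3\le P$. Here $\alpha_i$ is user $i$'s power on the block Markov (repeated old message) component, $\beta_i$ its power on the new message, $k_i\alpha_i$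 the relay's power on the coherent repetition of user $i$'s old message, and $\beta_3$ the relay's power on the independently coded bin index. *)

theory Defs
  imports Complex_Main
begin

datatype node = N1 | N2 | Rl

definition C :: "real \<Rightarrow> real" where "C x = ln (1 + x)"

record wsr_point =
  R1 :: real  R2 :: real
  al1 :: real  al2 :: real
  be1 :: real  be2 :: real  be3 :: real
  k1 :: real  k2 :: real

text \<open>g i j is the amplitude of the link from node j to node i.\<close>
definition J1 :: "(node \<Rightarrow> node \<Rightarrow> real) \<Rightarrow> wsr_point \<Rightarrow> real" where
  "J1 g p = C ((g Rl N1)^2 * be1 p)"
definition J3 :: "(node \<Rightarrow> node \<Rightarrow> real) \<Rightarrow> wsr_point \<Rightarrow> real" where
  "J3 g p = C ((g Rl N2)^2 * be2 p)"
definition J5 :: "(node \<Rightarrow> node \<Rightarrow> real) \<Rightarrow> wsr_point \<Rightarrow> real" where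
  "J5 g p = C ((g Rl N1)^2 * be1 p + (g Rl N2)^2 * be2 p)"
definition J2 :: "(node \<Rightarrow> node \<Rightarrow> real) \<Rightarrow> real \<Rightarrow> wsr_point \<Rightarrow> real" where
  "J2 g P p = C ((g N2 N1)^2 * P + 2 * g N2 N1 * g N2 Rl * sqrt (k1 p) * al1 p
                 + (g N2 Rl)^2 * k1 p * al1 p + (g N2 Rl)^2 * be3 p)"
definition J4 :: "(node \<Rightarrow> node \<Rightarrow> real) \<Rightarrow> real \<Rightarrow> wsr_point \<Rightarrow> real" where
  "J4 g P p = C ((g N1 N2)^2 * P + 2 * g N1 N2 * g N1 Rl * sqrt (k2 p) * al2 p
                 + (g N1 Rl)^2 * k2 p * al2 p + (g N1 Rl)^2 * be3 p)"

definition wsr_feasible :: "(node \<Rightarrow> node \<Rightarrow> real) \<Rightarrow> real \<Rightarrow> wsr_point \<Rightarrow> bool" where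
  "wsr_feasible g P p \<longleftrightarrow>
     R1 p \<ge> 0 \<and> R2 p \<ge> 0 \<and> al1 p \<ge> 0 \<and> al2 p \<ge> 0 \<and> be1 p \<ge> 0 \<and> be2 p \<ge> 0 \<and>
     be3 p \<ge> 0 \<and> k1 p \<ge> 0 \<and> k2 p \<ge> 0 \<and>
     R1 p \<le> min (J1 g p) (J2 g P p) \<and> R2 p \<le> min (J3 g p) (J4 g P p) \<and>
     R1 p + R2 p \<le> J5 g p \<and>
     al1 p + be1 p \<le> P \<and> al2 p + be2 p \<le> P \<and>
     k1 p * al1 p + k2 p * al2 p + be3 p \<le> P"

definition wsr_obj :: "real \<Rightarrow> wsr_point \<Rightarrow> real" where
  "wsr_obj \<mu> p = \<mu> * R1 p + (1 - \<mu>) * R2 p"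

definition wsr_optimal :: "(node \<Rightarrow> node \<Rightarrow> real) \<Rightarrow> real \<Rightarrow> real \<Rightarrow> wsr_point \<Rightarrow> bool" where
  "wsr_optimal g P \<mu> p \<longleftrightarrow> wsr_feasible g P p \<and>
     (\<forall>q. wsr_feasible g P q \<longrightarrow> wsr_obj \<mu> q \<le> wsr_obj \<mu> p)"

end

theory Submission
  imports Defs
begin

lemma C_mono: "0 \<le> x \<Longrightarrow> x \<le> y \<Longrightarrow> C x \<le> C y"
  unfolding C_def by simp

theorem lemma1:
  fixes g :: "node \<Rightarrow> node \<Rightarrow> real" and P \<mu> :: real and p :: wsr_point
  assumes "\<forall>i j. g i j \<ge> 0" and "P > 0" and "0 \<le> \<mu>" and "\<mu> \<le> 1"
    and "wsr_optimal g P \<mu> p"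
  shows "\<exists>q. wsr_optimal g P \<mu> q \<and> al1 q + be1 q = P \<and> al2 q + be2 q = P \<and>
           (al1 q > 0 \<or> al2 q > 0 \<longrightarrow> k1 q * al1 q + k2 q * al2 q + be3 q = P)"
proof -
  have F: "wsr_feasible g P p" and O: "\<forall>q. wsr_feasible g P q \<longrightarrow> wsr_obj \<mu> q \<le> wsr_obj \<mu> p"
    using assms(5) unfolding wsr_optimal_def by auto
  define q where "q = p\<lparr>be1 := P - al1 p, be2 := P - al2 p, be3 := P - k1 p * al1 p - k2 p * al2 p\<rparr>"
  have g: "\<And>i j. g i j \<ge> 0" using assms(1) by auto
  have b1: "be1 p \<le> be1 q" "be2 p \<le> be2 q" "be3 p \<le> be3 q"
    using F unfolding q_def wsr_feasible_def by auto
  have nn: "0 \<le> be1 p" "0 \<le> be2 p" "0 \<le> be3 p" "0 \<le> k1 p" "0 \<le> k2 p" "0 \<le> al1 p" "0 \<le> al2 p"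
    using F unfolding wsr_feasible_def by auto
  have "J1 g p \<le> J1 g q" unfolding J1_def
    by (rule C_mono) (use b1 nn in \<open>auto intro: mult_left_mono\<close>)
  moreover have "J3 g p \<le> J3 g q" unfolding J3_def
    by (rule C_mono) (use b1 nn in \<open>auto intro: mult_left_mono\<close>)
  moreover have "J5 g p \<le> J5 g q" unfolding J5_def
    by (rule C_mono) (use b1 nn in \<open>auto intro!: add_mono mult_left_mono\<close>)
  moreover have "J2 g P p \<le> J2 g P q" unfolding J2_def
    by (rule C_mono) (use b1 nn g assms(2) in \<open>auto simp: q_def intro!: add_mono mult_left_mono add_nonneg_nonneg mult_nonneg_nonneg\<close>)
  moreover have "J4 g P p \<le> J4 g P q" unfolding J4_def
    by (rule C_mono) (use b1 nn g assms(2) in \<open>auto simp: q_def intro!: add_mono mult_left_mono add_nonneg_nonneg mult_nonneg_nonneg\<close>)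
  ultimately have Fq: "wsr_feasible g P q"
    using F b1 nn unfolding wsr_feasible_def by (auto simp: q_def)
  have "wsr_obj \<mu> q = wsr_obj \<mu> p" by (simp add: wsr_obj_def q_def)
  hence "wsr_optimal g P \<mu> q" using Fq O unfolding wsr_optimal_def by simp
  thus ?thesis by (intro exI[of _ q]) (simp add: q_def)
qed

end
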